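(* Let $\mathbb{F}_q$ have characteristic $p\ne2$, $f(X)=aX^2+c\in\mathbb{F}_q[X]$ with $a\neq0$, $r\ge 1$, $k\ge 2$. For every $(x_1,\dots,x_k)\in\overline{\mathbb{F}_q}^{\,k}$ with $f^r(x_1)=\dots=f^r(x_k)$ there exist a permutation $\sigma\in S_k$ and integers $d_1,\dots,d_{k-1}\in\{-1,0,\dots,r-1\}$ such that $\phi(x_{\sigma(i)},x_{\sigma(i+1)};d_i)=0$ for $1\le i\le k-1$, and such that for every $1\le s<t\le k-1$ the maximum of $d_s,\dots,d_t$ is either $-1$ or is attained at exactly one index.
   Context: Iterates: $f^0(X)=X$, $f^{j+1}(X)=f(f^j(X))$. Define $\phi(X,Y;-1)=X-Y$ and $\phi(X,Y;d)=f^d(X)+f^d(Y)$ for $d\ge0$. *)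

theory Defs
  imports "HOL-Algebra.Algebraic_Closure_Type" "HOL-Combinatorics.Permutations"
begin

definition quad_map :: "'k::field \<Rightarrow> 'k \<Rightarrow> 'k alg_closure \<Rightarrow> 'k alg_closure" where
  "quad_map a c z = to_ac a * z ^ 2 + to_ac c"

definition phi :: "('b::ab_group_add \<Rightarrow> 'b) \<Rightarrow> 'b \<Rightarrow> 'b \<Rightarrow> int \<Rightarrow> 'b" where
  "phi f u v d = (if d = -1 then u - v else (f ^^ nat d) u + (f ^^ nat d) v)"

end

theory Submission
  imports Defs
begin

definition good :: "(nat \<Rightarrow> int) \<Rightarrow> nat \<Rightarrow> bool" where
  "good d n \<longleftrightarrow> (\<forall>s t. s \<le> t \<longrightarrow> t < n \<longrightarrow>
      (\<forall>j\<in>{s..t}. d j = -1) \<or> (\<exists>i\<in>{s..t}. \<forall>j\<in>{s..t}. j \<noteq> i \<longrightarrow> d j < d i))"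

lemma quad_sq:
  fixes a c :: "'k::field"
  assumes "a \<noteq> 0" "quad_map a c u = quad_map a c v"
  shows "u = v \<or> u = - v"
proof -
  have "to_ac a * (u^2 - v^2) = 0" using assms(2) by (simp add: quad_map_def algebra_simps)
  moreover have "to_ac a \<noteq> 0" using assms(1) by (metis to_ac_0 to_ac_eq_iff)
  ultimately have "(u - v) * (u + v) = 0" by (simp add: power2_eq_square algebra_simps)
  thus ?thesis by (auto simp: eq_neg_iff_add_eq_0)
qed

lemma main:
  fixes g :: "'b::ab_group_add \<Rightarrow> 'b" and x :: "nat \<Rightarrow> 'b"
  assumes sq: "\<And>u v. g u = g v \<Longrightarrow> u = v \<or> u = - v"
  shows "\<forall>i\<in>set is. \<forall>j\<in>set is. (g^^r)(x i) = (g^^r)(x j) \<Longrightarrow>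
    \<exists>js d. mset js = mset is \<and>
      (\<forall>i. Suc i < length js \<longrightarrow> d i \<in> {-1..int r - 1} \<and> phi g (x (js!i)) (x (js!Suc i)) (d i) = 0)
      \<and> good d (length js - 1)"
proof (induction r arbitrary: "is")
  case 0
  show ?case
  proof (intro exI conjI)
    show "mset is = mset is" ..
    show "\<forall>i. Suc i < length is \<longrightarrow> (\<lambda>_. -1::int) i \<in> {-1..int 0 - 1} \<and>
       phi g (x (is!i)) (x (is!Suc i)) ((\<lambda>_. -1::int) i) = 0"
      using 0 by (auto simp: phi_def)
    show "good (\<lambda>_. -1) (length is - 1)" by (simp add: good_def)
  qed
next
  case (Suc r)
  show ?case
  proof (cases "is = []")
    case True
    show ?thesis by (rule exI[of _ "[]"], rule exI[of _ "\<lambda>_. 0"]) (simp add: True good_def)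
  next
    case False
    define y where "y = (g^^r) (x (hd is))"
    define A where "A = filter (\<lambda>i. (g^^r)(x i) = y) is"
    define B where "B = filter (\<lambda>i. (g^^r)(x i) \<noteq> y) is"
    have hdin: "hd is \<in> set is" using False by simp
    have Ay: "\<forall>i\<in>set A. (g^^r)(x i) = y" by (simp add: A_def)
    have By: "\<forall>i\<in>set B. (g^^r)(x i) = - y"
    proof
      fix i assume "i \<in> set B"
      hence i: "i \<in> set is" "(g^^r)(x i) \<noteq> y" by (auto simp: B_def)
      have "(g^^Suc r)(x i) = (g^^Suc r)(x (hd is))" using Suc.prems i(1) hdin by blast
      hence "g ((g^^r)(x i)) = g y" by (simp add: y_def)
      thus "(g^^r)(x i) = - y" using sq i(2) by blast
    qed
    have msAB: "mset A + mset B = mset is"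
      unfolding A_def B_def by (metis mset_filter multiset_partition)
    obtain jsA dA where hA: "mset jsA = mset A"
      "\<forall>i. Suc i < length jsA \<longrightarrow> dA i \<in> {-1..int r - 1} \<and> phi g (x (jsA!i)) (x (jsA!Suc i)) (dA i) = 0"
      "good dA (length jsA - 1)"
      using Suc.IH[of A] Ay by auto
    obtain jsB dB where hB: "mset jsB = mset B"
      "\<forall>i. Suc i < length jsB \<longrightarrow> dB i \<in> {-1..int r - 1} \<and> phi g (x (jsB!i)) (x (jsB!Suc i)) (dB i) = 0"
      "good dB (length jsB - 1)"
      using Suc.IH[of B] By by auto
    show ?thesis
    proof (cases "B = []")
      case True
      show ?thesis
        by (rule exI[of _ jsA], rule exI[of _ dA]) (use hA msAB True in auto)
    next
      case Bne: False
      have Ane: "A \<noteq> []" using hdin by (auto simp: A_def y_def filter_empty_conv)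
      define n where "n = length jsA"
      define m where "m = length jsB"
      have n1: "n \<ge> 1" proof -
        have "jsA \<noteq> []" using Ane hA(1) by auto
        thus ?thesis by (simp add: n_def Suc_le_eq)
      qed
      have m1: "m \<ge> 1" proof -
        have "jsB \<noteq> []" using Bne hB(1) by auto
        thus ?thesis by (simp add: m_def Suc_le_eq)
      qed
      define D where "D i = (if i < n - 1 then dA i else if i = n - 1 then int r else dB (i - n))" for i
      define js where "js = jsA @ jsB"
      have len: "length js = n + m" by (simp add: js_def n_def m_def)
      have lastA: "(g^^r) (x (jsA ! (n - 1))) = y"
        using Ay hA(1) n1 n_def by (metis diff_less less_numeral_extra(1) mset_eq_setD nth_mem order_less_le_trans)
      have firstB: "(g^^r) (x (jsB ! 0)) = - y"
        using By hB(1) m1 m_def by (metis less_le_trans mset_eq_setD nth_mem zero_less_one)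
      have gaps: "\<forall>i. Suc i < length js \<longrightarrow> D i \<in> {-1..int (Suc r) - 1} \<and> phi g (x (js!i)) (x (js!Suc i)) (D i) = 0"
      proof (intro allI impI)
        fix i assume i: "Suc i < length js"
        consider "i < n - 1" | "i = n - 1" | "i \<ge> n" by linarith
        thus "D i \<in> {-1..int (Suc r) - 1} \<and> phi g (x (js!i)) (x (js!Suc i)) (D i) = 0"
        proof cases
          case 1
          thus ?thesis using hA(2)[rule_format, of i] n1
            by (auto simp: D_def js_def nth_append n_def)
        next
          case 2
          thus ?thesis using lastA firstB n1
            by (auto simp: D_def js_def nth_append n_def phi_def)
        next
          case 3
          hence "Suc (i - n) < length jsB" using i len m_def by linarith
          hence "dB (i - n) \<in> {-1..int r - 1} \<and> phi g (x (jsB!(i-n))) (x (jsB!Suc (i-n))) (dB (i-n)) = 0"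
            using hB(2) by blast
          moreover have "Suc i - n = Suc (i - n)" using 3 by simp
          ultimately show ?thesis using 3 n1
            by (auto simp: D_def js_def nth_append n_def)
        qed
      qed
      have bnd: "j < n + m - 1 \<Longrightarrow> j \<noteq> n - 1 \<Longrightarrow> D j < int r" for j
      proof -
        assume j: "j < n + m - 1" "j \<noteq> n - 1"
        show "D j < int r"
        proof (cases "j < n - 1")
          case True
          then show ?thesis using hA(2)[rule_format, of j] by (auto simp: D_def n_def)
        next
          case False
          hence "j \<ge> n" using j by linarith
          hence "Suc (j - n) < length jsB" using j m_def by linarith
          thus ?thesis using hB(2)[rule_format, of "j - n"] False j by (auto simp: D_def)
        qed
      qed
      have "good D (length js - 1)"
        unfolding good_def
      proof (intro allI impI)
        fix s t assume st: "s \<le> t" "t < length js - 1"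
        consider "t < n - 1" | "s \<ge> n" | "s \<le> n - 1" "n - 1 \<le> t" by linarith
        thus "(\<forall>j\<in>{s..t}. D j = -1) \<or> (\<exists>i\<in>{s..t}. \<forall>j\<in>{s..t}. j \<noteq> i \<longrightarrow> D j < D i)"
        proof cases
          case 1
          hence eq: "\<forall>j\<in>{s..t}. D j = dA j" by (auto simp: D_def)
          have "(\<forall>j\<in>{s..t}. dA j = -1) \<or> (\<exists>i\<in>{s..t}. \<forall>j\<in>{s..t}. j \<noteq> i \<longrightarrow> dA j < dA i)"
            using hA(3) st 1 unfolding good_def n_def by blast
          thus ?thesis using eq by auto
        next
          case 2
          have "(\<forall>j\<in>{s-n..t-n}. dB j = -1) \<or> (\<exists>i\<in>{s-n..t-n}. \<forall>j\<in>{s-n..t-n}. j \<noteq> i \<longrightarrow> dB j < dB i)"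
          proof -
            have "t - n < length jsB - 1" using st 2 len m_def by linarith
            moreover have "s - n \<le> t - n" using st by simp
            ultimately show ?thesis using hB(3) unfolding good_def by blast
          qed
          thus ?thesis
          proof
            assume h: "\<forall>j\<in>{s-n..t-n}. dB j = -1"
            show ?thesis
            proof (rule disjI1, intro ballI)
              fix j assume j: "j \<in> {s..t}"
              hence "j - n \<in> {s-n..t-n}" by auto
              hence "dB (j - n) = -1" using h by blast
              thus "D j = -1" using j 2 n1 by (auto simp: D_def)
            qed
          next
            assume "\<exists>i\<in>{s-n..t-n}. \<forall>j\<in>{s-n..t-n}. j \<noteq> i \<longrightarrow> dB j < dB i"
            then obtain i where i: "i \<in> {s-n..t-n}" "\<forall>j\<in>{s-n..t-n}. j \<noteq> i \<longrightarrow> dB j < dB i" by blast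
            show ?thesis
            proof (rule disjI2, rule bexI[of _ "i + n"], intro ballI impI)
              show "i + n \<in> {s..t}" using i 2 st by auto
              fix j assume j: "j \<in> {s..t}" "j \<noteq> i + n"
              hence "j - n \<in> {s-n..t-n}" "j - n \<noteq> i" using 2 by auto
              hence "dB (j - n) < dB i" using i by blast
              thus "D j < D (i + n)" using j 2 n1 by (auto simp: D_def)
            qed
          qed
        next
          case 3
          show ?thesis
          proof (rule disjI2, rule bexI[of _ "n - 1"], intro ballI impI)
            show "n - 1 \<in> {s..t}" using 3 by auto
            fix j assume j: "j \<in> {s..t}" "j \<noteq> n - 1"
            have "D j < int r" using bnd[of j] j st len by auto
            thus "D j < D (n - 1)" by (simp add: D_def)
          qed
        qed
      qed
      moreover have "mset js = mset is" using hA(1) hB(1) msAB by (simp add: js_def)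
      ultimately show ?thesis using gaps by blast
    qed
  qed
qed

theorem lemma5:
  fixes a c :: "'k::{finite,field}" and r k :: nat and x :: "nat \<Rightarrow> 'k alg_closure"
  assumes "CHAR('k) \<noteq> 2" and "a \<noteq> 0" and "r \<ge> 1" and "k \<ge> 2"
    and "\<forall>i\<in>{1..k}. \<forall>j\<in>{1..k}. (quad_map a c ^^ r) (x i) = (quad_map a c ^^ r) (x j)"
  shows "\<exists>\<sigma> d. \<sigma> permutes {1..k} \<and>
     (\<forall>i\<in>{1..k-1}. d i \<in> {-1..int r - 1} \<and> phi (quad_map a c) (x (\<sigma> i)) (x (\<sigma> (i+1))) (d i) = 0) \<and>
     (\<forall>s t. 1 \<le> s \<and> s < t \<and> t \<le> k - 1 \<longrightarrow>
        Max (d ` {s..t}) = -1 \<or> card {i\<in>{s..t}. d i = Max (d ` {s..t})} = 1)"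
proof -
  have sq: "\<And>u v. quad_map a c u = quad_map a c v \<Longrightarrow> u = v \<or> u = - v"
    using quad_sq assms(2) by blast
  have "\<forall>i\<in>set [1..<k+1]. \<forall>j\<in>set [1..<k+1]. (quad_map a c^^r)(x i) = (quad_map a c^^r)(x j)"
    using assms(5) by auto
  from main[OF sq this] obtain js d where h: "mset js = mset [1..<k+1]"
      "\<forall>i. Suc i < length js \<longrightarrow> d i \<in> {-1..int r - 1} \<and> phi (quad_map a c) (x (js!i)) (x (js!Suc i)) (d i) = 0"
      "good d (length js - 1)" by blast
  have len: "length js = k" using h(1) by (metis length_upt diff_add_inverse2 size_mset)
  have dist: "distinct js" using h(1) by (metis distinct_upt mset_eq_imp_distinct_iff)
  have setjs: "set js = {1..k}" using h(1) by (metis mset_eq_setD set_upt atLeastLessThanSuc_atLeastAtMost Suc_eq_plus1)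
  define \<sigma> where "\<sigma> i = (if i \<in> {1..k} then js ! (i - 1) else i)" for i
  define d' where "d' i = d (i - 1)" for i
  have perm: "\<sigma> permutes {1..k}"
  proof (rule bij_imp_permutes)
    show "bij_betw \<sigma> {1..k} {1..k}"
      unfolding bij_betw_def
    proof
      show "inj_on \<sigma> {1..k}"
      proof (rule inj_onI)
        fix u v assume uv: "u \<in> {1..k}" "v \<in> {1..k}" "\<sigma> u = \<sigma> v"
        hence "js ! (u - 1) = js ! (v - 1)" by (simp add: \<sigma>_def)
        moreover have "u - 1 < length js" "v - 1 < length js" using uv len by auto
        ultimately have "u - 1 = v - 1" using dist nth_eq_iff_index_eq by blast
        thus "u = v" using uv by auto
      qed
      show "\<sigma> ` {1..k} = {1..k}"
      proof
        show "\<sigma> ` {1..k} \<subseteq> {1..k}"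
        proof
          fix y assume "y \<in> \<sigma> ` {1..k}"
          then obtain u where u: "u \<in> {1..k}" "y = js ! (u - 1)" by (auto simp: \<sigma>_def)
          hence "y \<in> set js" using len by auto
          thus "y \<in> {1..k}" using setjs by simp
        qed
        show "{1..k} \<subseteq> \<sigma> ` {1..k}"
        proof
          fix y assume "y \<in> {1..k}"
          hence "y \<in> set js" using setjs by simp
          then obtain j where j: "j < k" "y = js ! j" using len by (auto simp: in_set_conv_nth)
          hence "\<sigma> (j + 1) = y" by (simp add: \<sigma>_def)
          moreover have "j + 1 \<in> {1..k}" using j by auto
          ultimately show "y \<in> \<sigma> ` {1..k}" by force
        qed
      qed
    qed
    show "\<sigma> y = y" if "y \<notin> {1..k}" for y using that unfolding \<sigma>_def by presburger
  qed
  have gaps: "\<forall>i\<in>{1..k-1}. d' i \<in> {-1..int r - 1} \<and> phi (quad_map a c) (x (\<sigma> i)) (x (\<sigma> (i+1))) (d' i) = 0"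
  proof
    fix i assume i: "i \<in> {1..k-1}"
    hence "Suc (i - 1) < length js" using len by auto
    moreover have "\<sigma> i = js ! (i - 1)" "\<sigma> (i+1) = js ! Suc (i - 1)" using i by (auto simp: \<sigma>_def)
    ultimately show "d' i \<in> {-1..int r - 1} \<and> phi (quad_map a c) (x (\<sigma> i)) (x (\<sigma> (i+1))) (d' i) = 0"
      using h(2) by (simp add: d'_def)
  qed
  have maxc: "\<forall>s t. 1 \<le> s \<and> s < t \<and> t \<le> k - 1 \<longrightarrow>
        Max (d' ` {s..t}) = -1 \<or> card {i\<in>{s..t}. d' i = Max (d' ` {s..t})} = 1"
  proof (intro allI impI)
    fix s t assume st: "1 \<le> s \<and> s < t \<and> t \<le> k - 1"
    have fin: "finite (d' ` {s..t})" "d' ` {s..t} \<noteq> {}" using st by auto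
    have "(\<forall>j\<in>{s-1..t-1}. d j = -1) \<or> (\<exists>i\<in>{s-1..t-1}. \<forall>j\<in>{s-1..t-1}. j \<noteq> i \<longrightarrow> d j < d i)"
    proof -
      have "s - 1 \<le> t - 1" "t - 1 < length js - 1" using st len by auto
      thus ?thesis using h(3) unfolding good_def by blast
    qed
    thus "Max (d' ` {s..t}) = -1 \<or> card {i\<in>{s..t}. d' i = Max (d' ` {s..t})} = 1"
    proof
      assume a: "\<forall>j\<in>{s-1..t-1}. d j = -1"
      have "\<forall>j\<in>{s..t}. d' j = -1"
      proof
        fix j assume "j \<in> {s..t}"
        hence "j - 1 \<in> {s-1..t-1}" by auto
        thus "d' j = -1" using a by (simp add: d'_def)
      qed
      moreover have "s \<in> {s..t}" using st by auto
      ultimately have "d' ` {s..t} = {-1}" by (auto intro!: rev_image_eqI[of s])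
      thus ?thesis by simp
    next
      assume "\<exists>i\<in>{s-1..t-1}. \<forall>j\<in>{s-1..t-1}. j \<noteq> i \<longrightarrow> d j < d i"
      then obtain i where i: "i \<in> {s-1..t-1}" "\<forall>j\<in>{s-1..t-1}. j \<noteq> i \<longrightarrow> d j < d i" by blast
      have i1: "i + 1 \<in> {s..t}" using i st by auto
      have lt: "\<forall>j\<in>{s..t}. j \<noteq> i + 1 \<longrightarrow> d' j < d' (i+1)"
      proof (intro ballI impI)
        fix j assume j: "j \<in> {s..t}" "j \<noteq> i + 1"
        hence "j - 1 \<in> {s-1..t-1}" "j - 1 \<noteq> i" using st by auto
        thus "d' j < d' (i+1)" using i by (simp add: d'_def)
      qed
      have M: "Max (d' ` {s..t}) = d' (i+1)"
      proof (rule Max_eqI)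
        show "finite (d' ` {s..t})" by simp
        show "y \<le> d' (i + 1)" if "y \<in> d' ` {s..t}" for y
          using that lt by (metis imageE order_less_imp_le order_refl)
        show "d' (i + 1) \<in> d' ` {s..t}" using i1 by blast
      qed
      have "{j\<in>{s..t}. d' j = Max (d' ` {s..t})} = {i+1}"
        using M lt i1 by fastforce
      thus ?thesis by simp
    qed
  qed
  show ?thesis using perm gaps maxc by blast
qed

end
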